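(* An ES combination operator $\nabla$ satisfies (ESF1)–(ESF7) and (ESF8W) if and only if there exists a unique quasifaithful assignment $\Phi\mapsto\succeq_\Phi$ such that $[\![B(\nabla(\Phi,E))]\!]=\max([\![B(E)]\!],\succeq_\Phi)$ for every profile $\Phi$ and every $E\in\mathcal E$.
   Context: Setting: an epistemic space $(\mathcal E,B,\mathcal L_{\mathcal P})$ ($\mathcal E$ nonempty, $B:\mathcal E\to\mathcal L_{\mathcal P}$ with image modulo equivalence exactly the consistent formulas over the finite variable set $\mathcal P$; $\mathcal W_{\mathcal P}$ valuations, $[\![\phi]\!]$ models); agents form a well-ordered set $\mathcal S$; a society is a nonempty finite $N\subseteq\mathcal S$; an $N$-profile is $\Phi:N\to\mathcal E$, $E_i=\Phi(i)$, identified with $E_i$ when $N=\{i\}$; profiles on $\{i_1<\dots<i_n\}$ and $\{j_1<\dots<j_m\}$ are equivalent ($\equiv$) if $n=m$ and entries coincide position-wise; $\Phi\upharpoonright_M$ restriction; partitions $\{N_1,N_2\}$ have nonempty disjoint parts. An ES combination operator maps (profile, $E$) to $\nabla(\Phi,E)\in\mathcal E$. Postulates: (ESF1) $B(\nabla(\Phi,E))\vdash B(E)$; (ESF2) if $\Phi\equiv\Phi'$ and $B(E)\equiv B(E')$ then $B(\nabla(\Phi,E))\equiv B(\nabla(\Phi',E'))$; (ESF3) if $B(E)\equiv B(E')\wedge B(E'')$ then $B(\nabla(\Phi,E'))\wedge B(E'')\vdash B(\nabla(\Phi,E))$; (ESF4) if moreover $B(\nabla(\Phi,E'))\wedge B(E'')\nvdash\bot$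 then $B(\nabla(\Phi,E))\vdash B(\nabla(\Phi,E'))\wedge B(E'')$; (ESF5) if $E_j\ne E_k$ there is $E'$ with $B(\nabla(E_j,E'))\not\equiv B(\nabla(E_k,E'))$; (ESF6) if $\bigwedge_{i\in N}B(E_i)\wedge B(E)\nvdash\bot$ then $B(\nabla(\Phi,E))\equiv\bigwedge_{i\in N}B(E_i)\wedge B(E)$; (ESF7) $B(\nabla(\Phi\upharpoonright_{N_1},E))\wedge B(\nabla(\Phi\upharpoonright_{N_2},E))\vdash B(\nabla(\Phi,E))$; (ESF8W) if $B(\nabla(\Phi\upharpoonright_{N_1},E))\wedge B(\nabla(\Phi\upharpoonright_{N_2},E))\nvdash\bot$ then $B(\nabla(\Phi,E))\vdash B(\nabla(\Phi\upharpoonright_{N_1},E))\vee B(\nabla(\Phi\upharpoonright_{N_2},E))$. An assignment maps each profile to a total preorder $\succeq_\Phi$ on $\mathcal W_{\mathcal P}$; it is basic if $\Phi\equiv\Psi$ implies $\succeq_\Phi=\succeq_\Psi$; it is quasifaithful if basic and: (1) $E_j\ne E_k$ implies $\succeq_{E_j}\ne\succeq_{E_k}$; (2) if $\bigwedge_{i\in N}B(E_i)\nvdash\bot$ then $[\![\bigwedge_{i\in N}B(E_i)]\!]=\max(\succeq_\Phi)$; (3) $w\succeq_{\Phi\upharpoonright_{N_1}}w'$ and $w\succeq_{\Phi\upharpoonright_{N_2}}w'$ imply $w\succeq_\Phi w'$; (4') $w\succ_{\Phi\upharpoonright_{N_1}}w'$ and $w\succ_{\Phi\upharpoonright_{N_2}}w'$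 imply $w\succ_\Phi w'$. $\max(C,\succeq)=\{c\in C:c\succeq x\ \forall x\in C\}$. *)

theory Defs
  imports Main
begin

text \<open>The finite variable set P is modelled by a type 'v of class finite.
 Valuations are sets of variables (those that are true).\<close>

datatype 'v fm = Var 'v | Bot | Neg "'v fm" | Conj "'v fm" "'v fm" | Disj "'v fm" "'v fm"

primrec models :: "'v fm \<Rightarrow> 'v set set" where
  "models (Var p) = {w. p \<in> w}"
| "models Bot = {}"
| "models (Neg f) = - models f"
| "models (Conj f g) = models f \<inter> models g"
| "models (Disj f g) = models f \<union> models g"

definition Top :: "'v fm" where "Top = Neg Bot"

definition entails :: "'v fm \<Rightarrow> 'v fm \<Rightarrow> bool" where
  "entails f g \<longleftrightarrow> models f \<subseteq> models g"

definition fequiv :: "'v fm \<Rightarrow> 'v fm \<Rightarrow> bool" where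
  "fequiv f g \<longleftrightarrow> models f = models g"

definition consistent :: "'v fm \<Rightarrow> bool" where
  "consistent f \<longleftrightarrow> \<not> entails f Bot"

definition epistemic_space :: "('e \<Rightarrow> 'v::finite fm) \<Rightarrow> bool" where
  "epistemic_space B \<longleftrightarrow>
     (\<forall>e. consistent (B e)) \<and> (\<forall>f. consistent f \<longrightarrow> (\<exists>e. fequiv (B e) f))"

text \<open>Agents form the well-ordered type 'a. A profile is a partial map from agents to
 states whose domain (the society) is finite and nonempty.\<close>

definition profile :: "('a \<rightharpoonup> 'e) \<Rightarrow> bool" where
  "profile \<Phi> \<longleftrightarrow> finite (dom \<Phi>) \<and> dom \<Phi> \<noteq> {}"

definition entries :: "('a::linorder \<rightharpoonup> 'e) \<Rightarrow> 'e list" where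
  "entries \<Phi> = map (\<lambda>i. the (\<Phi> i)) (sorted_list_of_set (dom \<Phi>))"

definition prof_equiv :: "('a::linorder \<rightharpoonup> 'e) \<Rightarrow> ('a \<rightharpoonup> 'e) \<Rightarrow> bool" where
  "prof_equiv \<Phi> \<Psi> \<longleftrightarrow> entries \<Phi> = entries \<Psi>"

definition partition2 :: "('a \<rightharpoonup> 'e) \<Rightarrow> 'a set \<Rightarrow> 'a set \<Rightarrow> bool" where
  "partition2 \<Phi> N1 N2 \<longleftrightarrow> N1 \<noteq> {} \<and> N2 \<noteq> {} \<and> N1 \<inter> N2 = {} \<and> N1 \<union> N2 = dom \<Phi>"

definition BigConj :: "('e \<Rightarrow> 'v fm) \<Rightarrow> ('a::linorder \<rightharpoonup> 'e) \<Rightarrow> 'v fm" where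
  "BigConj B \<Phi> = foldr (\<lambda>e f. Conj (B e) f) (entries \<Phi>) Top"

definition ESF_postulates ::
  "('e \<Rightarrow> 'v fm) \<Rightarrow> (('a::linorder \<rightharpoonup> 'e) \<Rightarrow> 'e \<Rightarrow> 'e) \<Rightarrow> bool" where
  "ESF_postulates B nabla \<longleftrightarrow>
    \<comment> \<open>ESF1\<close>
    (\<forall>\<Phi> E. profile \<Phi> \<longrightarrow> entails (B (nabla \<Phi> E)) (B E)) \<and>
    \<comment> \<open>ESF2\<close>
    (\<forall>\<Phi> \<Phi>' E E'. profile \<Phi> \<longrightarrow> profile \<Phi>' \<longrightarrow> prof_equiv \<Phi> \<Phi>' \<longrightarrow> fequiv (B E) (B E') \<longrightarrow>
        fequiv (B (nabla \<Phi> E)) (B (nabla \<Phi>' E'))) \<and>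
    \<comment> \<open>ESF3\<close>
    (\<forall>\<Phi> E E' E''. profile \<Phi> \<longrightarrow> fequiv (B E) (Conj (B E') (B E'')) \<longrightarrow>
        entails (Conj (B (nabla \<Phi> E')) (B E'')) (B (nabla \<Phi> E))) \<and>
    \<comment> \<open>ESF4\<close>
    (\<forall>\<Phi> E E' E''. profile \<Phi> \<longrightarrow> fequiv (B E) (Conj (B E') (B E'')) \<longrightarrow>
        consistent (Conj (B (nabla \<Phi> E')) (B E'')) \<longrightarrow>
        entails (B (nabla \<Phi> E)) (Conj (B (nabla \<Phi> E')) (B E''))) \<and>
    \<comment> \<open>ESF5 (single-agent profiles)\<close>
    (\<forall>j k Ej Ek. Ej \<noteq> Ek \<longrightarrow>
        (\<exists>E'. \<not> fequiv (B (nabla [j \<mapsto> Ej] E')) (B (nabla [k \<mapsto> Ek] E')))) \<and>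
    \<comment> \<open>ESF6\<close>
    (\<forall>\<Phi> E. profile \<Phi> \<longrightarrow> consistent (Conj (BigConj B \<Phi>) (B E)) \<longrightarrow>
        fequiv (B (nabla \<Phi> E)) (Conj (BigConj B \<Phi>) (B E))) \<and>
    \<comment> \<open>ESF7\<close>
    (\<forall>\<Phi> N1 N2 E. profile \<Phi> \<longrightarrow> partition2 \<Phi> N1 N2 \<longrightarrow>
        entails (Conj (B (nabla (\<Phi> |` N1) E)) (B (nabla (\<Phi> |` N2) E))) (B (nabla \<Phi> E))) \<and>
    \<comment> \<open>ESF8W\<close>
    (\<forall>\<Phi> N1 N2 E. profile \<Phi> \<longrightarrow> partition2 \<Phi> N1 N2 \<longrightarrow>
        consistent (Conj (B (nabla (\<Phi> |` N1) E)) (B (nabla (\<Phi> |` N2) E))) \<longrightarrow>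
        entails (B (nabla \<Phi> E)) (Disj (B (nabla (\<Phi> |` N1) E)) (B (nabla (\<Phi> |` N2) E))))"

text \<open>An assignment maps each profile to a relation on valuations ('R \<Phi> w w'' means w \<succeq>_\<Phi> w'').\<close>

definition total_preorder :: "('w \<Rightarrow> 'w \<Rightarrow> bool) \<Rightarrow> bool" where
  "total_preorder r \<longleftrightarrow> (\<forall>x y. r x y \<or> r y x) \<and> (\<forall>x y z. r x y \<longrightarrow> r y z \<longrightarrow> r x z)"

definition maxset :: "'w set \<Rightarrow> ('w \<Rightarrow> 'w \<Rightarrow> bool) \<Rightarrow> 'w set" where
  "maxset C r = {c \<in> C. \<forall>x\<in>C. r c x}"

definition strict :: "('w \<Rightarrow> 'w \<Rightarrow> bool) \<Rightarrow> 'w \<Rightarrow> 'w \<Rightarrow> bool" where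
  "strict r x y \<longleftrightarrow> r x y \<and> \<not> r y x"

definition assignment :: "(('a \<rightharpoonup> 'e) \<Rightarrow> 'v set \<Rightarrow> 'v set \<Rightarrow> bool) \<Rightarrow> bool" where
  "assignment R \<longleftrightarrow> (\<forall>\<Phi>. profile \<Phi> \<longrightarrow> total_preorder (R \<Phi>))"

definition basic_assignment :: "(('a::linorder \<rightharpoonup> 'e) \<Rightarrow> 'v set \<Rightarrow> 'v set \<Rightarrow> bool) \<Rightarrow> bool" where
  "basic_assignment R \<longleftrightarrow> assignment R \<and>
     (\<forall>\<Phi> \<Psi>. profile \<Phi> \<longrightarrow> profile \<Psi> \<longrightarrow> prof_equiv \<Phi> \<Psi> \<longrightarrow> R \<Phi> = R \<Psi>)"

definition quasifaithful ::
  "('e \<Rightarrow> 'v fm) \<Rightarrow> (('a::linorder \<rightharpoonup> 'e) \<Rightarrow> 'v set \<Rightarrow> 'v set \<Rightarrow> bool) \<Rightarrow> bool" where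
  "quasifaithful B R \<longleftrightarrow> basic_assignment R \<and>
    \<comment> \<open>(1)\<close>
    (\<forall>j k Ej Ek. Ej \<noteq> Ek \<longrightarrow> R [j \<mapsto> Ej] \<noteq> R [k \<mapsto> Ek]) \<and>
    \<comment> \<open>(2)\<close>
    (\<forall>\<Phi>. profile \<Phi> \<longrightarrow> consistent (BigConj B \<Phi>) \<longrightarrow>
        models (BigConj B \<Phi>) = maxset UNIV (R \<Phi>)) \<and>
    \<comment> \<open>(3)\<close>
    (\<forall>\<Phi> N1 N2 w w'. profile \<Phi> \<longrightarrow> partition2 \<Phi> N1 N2 \<longrightarrow>
        R (\<Phi> |` N1) w w' \<longrightarrow> R (\<Phi> |` N2) w w' \<longrightarrow> R \<Phi> w w') \<and>
    \<comment> \<open>(4')\<close>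
    (\<forall>\<Phi> N1 N2 w w'. profile \<Phi> \<longrightarrow> partition2 \<Phi> N1 N2 \<longrightarrow>
        strict (R (\<Phi> |` N1)) w w' \<longrightarrow> strict (R (\<Phi> |` N2)) w w' \<longrightarrow> strict (R \<Phi>) w w')"

definition represents ::
  "('e \<Rightarrow> 'v fm) \<Rightarrow> (('a \<rightharpoonup> 'e) \<Rightarrow> 'e \<Rightarrow> 'e) \<Rightarrow> (('a \<rightharpoonup> 'e) \<Rightarrow> 'v set \<Rightarrow> 'v set \<Rightarrow> bool) \<Rightarrow> bool" where
  "represents B nabla R \<longleftrightarrow>
     (\<forall>\<Phi> E. profile \<Phi> \<longrightarrow> models (B (nabla \<Phi> E)) = maxset (models (B E)) (R \<Phi>))"

end

theory Submission
  imports Defs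
begin


lemma consistent_iff: "consistent f \<longleftrightarrow> models f \<noteq> {}"
  by (auto simp: consistent_def entails_def)

lemma int_insert_eq: "(A \<inter> insert p V = C \<inter> insert p V) \<longleftrightarrow> (A \<inter> V = C \<inter> V \<and> (p \<in> A \<longleftrightarrow> p \<in> C))"
  by blast

lemma ex_fm_pt: "finite V \<Longrightarrow> \<exists>f. models f = {u. u \<inter> V = w \<inter> V}"
proof (induction V rule: finite_induct)
  case empty
  show ?case by (rule exI[of _ Top]) (simp add: Top_def)
next
  case (insert p V)
  then obtain f where f: "models f = {u. u \<inter> V = w \<inter> V}" by blast
  show ?case
  proof (cases "p \<in> w")
    case True
    have "models (Conj f (Var p)) = {u. u \<inter> V = w \<inter> V \<and> (p \<in> u \<longleftrightarrow> p \<in> w)}"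
      using True by (auto simp: f)
    also have "\<dots> = {u. u \<inter> insert p V = w \<inter> insert p V}" by (simp only: int_insert_eq)
    finally show ?thesis by blast
  next
    case False
    have "models (Conj f (Neg (Var p))) = {u. u \<inter> V = w \<inter> V \<and> (p \<in> u \<longleftrightarrow> p \<in> w)}"
      using False by (auto simp: f)
    also have "\<dots> = {u. u \<inter> insert p V = w \<inter> insert p V}" by (simp only: int_insert_eq)
    finally show ?thesis by blast
  qed
qed

lemma ex_fm: "\<exists>f. models (f :: 'v::finite fm) = S"
proof -
  have "finite S" by (rule finite_subset[OF subset_UNIV finite_UNIV])
  then show ?thesis
  proof (induction S rule: finite_induct)
    case empty show ?case by (rule exI[of _ Bot]) simp
  next
    case (insert w S)
    then obtain f where f: "models f = S" by blast
    obtain g where g: "models (g::'v fm) = {u. u \<inter> UNIV = w \<inter> UNIV}" using ex_fm_pt[of UNIV w] by auto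
    have "models g = {w}" using g by auto
    then show ?case by (intro exI[of _ "Disj g f"]) (simp add: f)
  qed
qed

definition estate :: "('e \<Rightarrow> 'v fm) \<Rightarrow> 'v set set \<Rightarrow> 'e" where
  "estate B S = (SOME e. models (B e) = S)"

lemma estate: assumes "epistemic_space B" "S \<noteq> {}"
  shows "models (B (estate B S)) = (S::'v::finite set set)"
proof -
  obtain f where f: "models (f::'v fm) = S" using ex_fm by blast
  then have "consistent f" using assms(2) by (simp add: consistent_iff)
  then obtain e where "fequiv (B e) f" using assms(1) unfolding epistemic_space_def by blast
  then have "models (B e) = S" using f by (simp add: fequiv_def)
  then show ?thesis unfolding estate_def by (rule someI)
qed

lemma B_ne: "epistemic_space B \<Longrightarrow> models (B e) \<noteq> {}"
  by (simp add: epistemic_space_def consistent_iff)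

lemma tp_refl: "total_preorder r \<Longrightarrow> r x x"
  unfolding total_preorder_def by blast

lemma max_pair: "total_preorder r \<Longrightarrow> (w \<in> maxset {w,w'} r) \<longleftrightarrow> r w w'"
  unfolding maxset_def using tp_refl[of r w] by auto

lemma profile_restr: "profile \<Phi> \<Longrightarrow> partition2 \<Phi> N1 N2 \<Longrightarrow> profile (\<Phi> |` N1) \<and> profile (\<Phi> |` N2)"
  unfolding profile_def partition2_def by (auto simp: dom_restrict)

lemma profile_single: "profile [j \<mapsto> e]"
  unfolding profile_def by simp



lemma rev_dir:
  fixes B :: "'e \<Rightarrow> 'v::finite fm"
    and nabla :: "('a::linorder \<rightharpoonup> 'e) \<Rightarrow> 'e \<Rightarrow> 'e"
    and R :: "('a \<rightharpoonup> 'e) \<Rightarrow> 'v set \<Rightarrow> 'v set \<Rightarrow> bool"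
  assumes es: "epistemic_space B" and qf: "quasifaithful B R" and rep: "represents B nabla R"
  shows "ESF_postulates B nabla"
proof -
  have tp: "\<And>\<Phi>. profile \<Phi> \<Longrightarrow> total_preorder (R \<Phi>)"
    using qf by (simp add: quasifaithful_def basic_assignment_def assignment_def)
  have trans: "\<And>\<Phi> x y z. profile \<Phi> \<Longrightarrow> R \<Phi> x y \<Longrightarrow> R \<Phi> y z \<Longrightarrow> R \<Phi> x z"
    using tp unfolding total_preorder_def by blast
  have tot: "\<And>\<Phi> x y. profile \<Phi> \<Longrightarrow> \<not> R \<Phi> x y \<Longrightarrow> R \<Phi> y x"
    using tp unfolding total_preorder_def by blast
  have basic: "\<And>\<Phi> \<Psi>. profile \<Phi> \<Longrightarrow> profile \<Psi> \<Longrightarrow> prof_equiv \<Phi> \<Psi> \<Longrightarrow> R \<Phi> = R \<Psi>"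
    using qf by (simp add: quasifaithful_def basic_assignment_def)
  have q1: "\<And>j k Ej Ek. Ej \<noteq> Ek \<Longrightarrow> R [j \<mapsto> Ej] \<noteq> R [k \<mapsto> Ek]"
    using qf by (simp add: quasifaithful_def)
  have q2: "\<And>\<Phi>. profile \<Phi> \<Longrightarrow> consistent (BigConj B \<Phi>) \<Longrightarrow>
        models (BigConj B \<Phi>) = maxset UNIV (R \<Phi>)"
    using qf by (simp add: quasifaithful_def)
  have q3: "\<And>\<Phi> N1 N2 w w'. profile \<Phi> \<Longrightarrow> partition2 \<Phi> N1 N2 \<Longrightarrow>
        R (\<Phi> |` N1) w w' \<Longrightarrow> R (\<Phi> |` N2) w w' \<Longrightarrow> R \<Phi> w w'"
    using qf by (simp add: quasifaithful_def)
  have q4: "\<And>\<Phi> N1 N2 w w'. profile \<Phi> \<Longrightarrow> partition2 \<Phi> N1 N2 \<Longrightarrow>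
        strict (R (\<Phi> |` N1)) w w' \<Longrightarrow> strict (R (\<Phi> |` N2)) w w' \<Longrightarrow> strict (R \<Phi>) w w'"
    using qf by (simp add: quasifaithful_def)
  have M: "\<And>\<Phi> E. profile \<Phi> \<Longrightarrow> models (B (nabla \<Phi> E)) = maxset (models (B E)) (R \<Phi>)"
    using rep by (simp add: represents_def)
  show ?thesis unfolding ESF_postulates_def
  proof (intro conjI allI impI)
    fix \<Phi> :: "'a \<rightharpoonup> 'e" and E assume "profile \<Phi>"
    then show "entails (B (nabla \<Phi> E)) (B E)" by (simp add: M entails_def maxset_def)
  next
    fix \<Phi> \<Phi>' :: "'a \<rightharpoonup> 'e" and E E' assume "profile \<Phi>" "profile \<Phi>'" "prof_equiv \<Phi> \<Phi>'" "fequiv (B E) (B E')"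
    then show "fequiv (B (nabla \<Phi> E)) (B (nabla \<Phi>' E'))"
      using basic by (simp add: M fequiv_def)
  next
    fix \<Phi> :: "'a \<rightharpoonup> 'e" and E E' E'' assume "profile \<Phi>" "fequiv (B E) (Conj (B E') (B E''))"
    then show "entails (Conj (B (nabla \<Phi> E')) (B E'')) (B (nabla \<Phi> E))"
      by (auto simp: M fequiv_def entails_def maxset_def)
  next
    fix \<Phi> :: "'a \<rightharpoonup> 'e" and E E' E'' assume p: "profile \<Phi>" and eq: "fequiv (B E) (Conj (B E') (B E''))"
      and c: "consistent (Conj (B (nabla \<Phi> E')) (B E''))"
    then obtain y where y: "y \<in> maxset (models (B E')) (R \<Phi>)" "y \<in> models (B E'')"
      by (auto simp: consistent_iff M p)
    show "entails (B (nabla \<Phi> E)) (Conj (B (nabla \<Phi> E')) (B E''))"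
      unfolding entails_def
    proof
      fix x assume "x \<in> models (B (nabla \<Phi> E))"
      then have x: "x \<in> models (B E') \<inter> models (B E'')" "\<And>z. z \<in> models (B E') \<inter> models (B E'') \<Longrightarrow> R \<Phi> x z"
        using eq by (auto simp: M p maxset_def fequiv_def)
      have "R \<Phi> x y" using x y by (auto simp: maxset_def)
      then have "\<forall>z\<in>models (B E'). R \<Phi> x z" using y trans[OF p] by (auto simp: maxset_def)
      then show "x \<in> models (Conj (B (nabla \<Phi> E')) (B E''))"
        using x by (auto simp: M p maxset_def)
    qed
  next
    fix j k :: 'a and Ej Ek assume ne: "(Ej::'e) \<noteq> Ek"
    have p1: "profile [j \<mapsto> Ej]" and p2: "profile [k \<mapsto> Ek]" by (rule profile_single)+
    have "\<exists>w w'. R [j \<mapsto> Ej] w w' \<noteq> R [k \<mapsto> Ek] w w'"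
    proof (rule ccontr)
      assume "\<not> (\<exists>w w'. R [j \<mapsto> Ej] w w' \<noteq> R [k \<mapsto> Ek] w w')"
      then have "R [j \<mapsto> Ej] = R [k \<mapsto> Ek]" by (intro ext) blast
      then show False using q1[OF ne, of j k] by simp
    qed
    then obtain w w' where d: "R [j \<mapsto> Ej] w w' \<noteq> R [k \<mapsto> Ek] w w'" by blast
    let ?E = "estate B {w, w'}"
    have mE: "models (B ?E) = {w,w'}" by (rule estate[OF es]) simp
    have "maxset {w,w'} (R [j \<mapsto> Ej]) \<noteq> maxset {w,w'} (R [k \<mapsto> Ek])"
    proof
      assume "maxset {w,w'} (R [j \<mapsto> Ej]) = maxset {w,w'} (R [k \<mapsto> Ek])"
      then have "R [j \<mapsto> Ej] w w' = R [k \<mapsto> Ek] w w'"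
        using max_pair[OF tp[OF p1], of w w'] max_pair[OF tp[OF p2], of w w'] by simp
      then show False using d by simp
    qed
    then show "\<exists>E'. \<not> fequiv (B (nabla [j \<mapsto> Ej] E')) (B (nabla [k \<mapsto> Ek] E'))"
      by (intro exI[of _ ?E]) (simp add: fequiv_def M[OF p1] M[OF p2] mE)
  next
    fix \<Phi> :: "'a \<rightharpoonup> 'e" and E assume p: "profile \<Phi>" and c: "consistent (Conj (BigConj B \<Phi>) (B E))"
    then have cb: "consistent (BigConj B \<Phi>)" by (auto simp: consistent_iff)
    have mb: "models (BigConj B \<Phi>) = maxset UNIV (R \<Phi>)" by (rule q2[OF p cb])
    from c obtain y where y: "y \<in> maxset UNIV (R \<Phi>)" "y \<in> models (B E)"
      by (auto simp: consistent_iff mb)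
    have "maxset (models (B E)) (R \<Phi>) = maxset UNIV (R \<Phi>) \<inter> models (B E)"
    proof
      show "maxset (models (B E)) (R \<Phi>) \<subseteq> maxset UNIV (R \<Phi>) \<inter> models (B E)"
      proof
        fix x assume x: "x \<in> maxset (models (B E)) (R \<Phi>)"
        then have "R \<Phi> x y" using y by (auto simp: maxset_def)
        then have "\<forall>z. R \<Phi> x z" using y(1) trans[OF p] unfolding maxset_def by blast
        then show "x \<in> maxset UNIV (R \<Phi>) \<inter> models (B E)"
          using x by (simp add: maxset_def)
      qed
    qed (auto simp: maxset_def)
    then show "fequiv (B (nabla \<Phi> E)) (Conj (BigConj B \<Phi>) (B E))"
      by (simp add: fequiv_def M p mb)
  next
    fix \<Phi> :: "'a \<rightharpoonup> 'e" and N1 N2 E assume p: "profile \<Phi>" and pt: "partition2 \<Phi> N1 N2"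
    from profile_restr[OF p pt] have p1: "profile (\<Phi> |` N1)" and p2: "profile (\<Phi> |` N2)" by auto
    show "entails (Conj (B (nabla (\<Phi> |` N1) E)) (B (nabla (\<Phi> |` N2) E))) (B (nabla \<Phi> E))"
      using q3[OF p pt] by (auto simp: entails_def M p p1 p2 maxset_def)
  next
    fix \<Phi> :: "'a \<rightharpoonup> 'e" and N1 N2 E assume p: "profile \<Phi>" and pt: "partition2 \<Phi> N1 N2"
      and c: "consistent (Conj (B (nabla (\<Phi> |` N1) E)) (B (nabla (\<Phi> |` N2) E)))"
    from profile_restr[OF p pt] have p1: "profile (\<Phi> |` N1)" and p2: "profile (\<Phi> |` N2)" by auto
    from c obtain z where z1: "z \<in> maxset (models (B E)) (R (\<Phi> |` N1))"
       and z2: "z \<in> maxset (models (B E)) (R (\<Phi> |` N2))"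
      by (auto simp: consistent_iff M p1 p2)
    show "entails (B (nabla \<Phi> E)) (Disj (B (nabla (\<Phi> |` N1) E)) (B (nabla (\<Phi> |` N2) E)))"
      unfolding entails_def
    proof
      fix x assume "x \<in> models (B (nabla \<Phi> E))"
      then have x: "x \<in> maxset (models (B E)) (R \<Phi>)" by (simp add: M p)
      show "x \<in> models (Disj (B (nabla (\<Phi> |` N1) E)) (B (nabla (\<Phi> |` N2) E)))"
      proof (rule ccontr)
        assume "x \<notin> models (Disj (B (nabla (\<Phi> |` N1) E)) (B (nabla (\<Phi> |` N2) E)))"
        then have n1: "x \<notin> maxset (models (B E)) (R (\<Phi> |` N1))"
          and n2: "x \<notin> maxset (models (B E)) (R (\<Phi> |` N2))" by (auto simp: M p1 p2)
        have s1: "strict (R (\<Phi> |` N1)) z x"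
        proof -
          from n1 x obtain y where "y \<in> models (B E)" "\<not> R (\<Phi> |` N1) x y" by (auto simp: maxset_def)
          moreover have "R (\<Phi> |` N1) z y" using z1 \<open>y \<in> models (B E)\<close> by (auto simp: maxset_def)
          moreover have "R (\<Phi> |` N1) z x" using z1 x by (auto simp: maxset_def)
          ultimately show ?thesis unfolding strict_def using trans[OF p1] by blast
        qed
        have s2: "strict (R (\<Phi> |` N2)) z x"
        proof -
          from n2 x obtain y where "y \<in> models (B E)" "\<not> R (\<Phi> |` N2) x y" by (auto simp: maxset_def)
          moreover have "R (\<Phi> |` N2) z y" using z2 \<open>y \<in> models (B E)\<close> by (auto simp: maxset_def)
          moreover have "R (\<Phi> |` N2) z x" using z2 x by (auto simp: maxset_def)
          ultimately show ?thesis unfolding strict_def using trans[OF p2] by blast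
        qed
        have "strict (R \<Phi>) z x" by (rule q4[OF p pt s1 s2])
        moreover have "R \<Phi> x z" using x z1 by (auto simp: maxset_def)
        ultimately show False by (simp add: strict_def)
      qed
    qed
  qed
qed



lemma fwd_dir:
  fixes B :: "'e \<Rightarrow> 'v::finite fm"
    and nabla :: "('a::linorder \<rightharpoonup> 'e) \<Rightarrow> 'e \<Rightarrow> 'e"
  assumes es: "epistemic_space B" and post: "ESF_postulates B nabla"
  shows "\<exists>R. quasifaithful B R \<and> represents B nabla R \<and>
      (\<forall>R'. quasifaithful B R' \<and> represents B nabla R' \<longrightarrow>
         (\<forall>\<Phi>. profile \<Phi> \<longrightarrow> R' \<Phi> = R \<Phi>))"
proof -
  note P = post[unfolded ESF_postulates_def]
  have ESF1: "\<And>\<Phi> E. profile \<Phi> \<Longrightarrow> entails (B (nabla \<Phi> E)) (B E)"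
    using P[THEN conjunct1] by blast
  have ESF2: "\<And>\<Phi> \<Phi>' E E'. profile \<Phi> \<Longrightarrow> profile \<Phi>' \<Longrightarrow> prof_equiv \<Phi> \<Phi>' \<Longrightarrow> fequiv (B E) (B E') \<Longrightarrow>
        fequiv (B (nabla \<Phi> E)) (B (nabla \<Phi>' E'))"
    using P[THEN conjunct2, THEN conjunct1] by blast
  have ESF3: "\<And>\<Phi> E E' E''. profile \<Phi> \<Longrightarrow> fequiv (B E) (Conj (B E') (B E'')) \<Longrightarrow>
        entails (Conj (B (nabla \<Phi> E')) (B E'')) (B (nabla \<Phi> E))"
    using P[THEN conjunct2, THEN conjunct2, THEN conjunct1] by blast
  have ESF4: "\<And>\<Phi> E E' E''. profile \<Phi> \<Longrightarrow> fequiv (B E) (Conj (B E') (B E'')) \<Longrightarrow>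
        consistent (Conj (B (nabla \<Phi> E')) (B E'')) \<Longrightarrow>
        entails (B (nabla \<Phi> E)) (Conj (B (nabla \<Phi> E')) (B E''))"
    using P[THEN conjunct2, THEN conjunct2, THEN conjunct2, THEN conjunct1] by blast
  have ESF5: "\<And>j k Ej Ek. Ej \<noteq> Ek \<Longrightarrow>
        (\<exists>E'. \<not> fequiv (B (nabla [j \<mapsto> Ej] E')) (B (nabla [k \<mapsto> Ek] E')))"
    using P[THEN conjunct2, THEN conjunct2, THEN conjunct2, THEN conjunct2, THEN conjunct1] by blast
  have ESF6: "\<And>\<Phi> E. profile \<Phi> \<Longrightarrow> consistent (Conj (BigConj B \<Phi>) (B E)) \<Longrightarrow>
        fequiv (B (nabla \<Phi> E)) (Conj (BigConj B \<Phi>) (B E))"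
    using P[THEN conjunct2, THEN conjunct2, THEN conjunct2, THEN conjunct2, THEN conjunct2, THEN conjunct1] by blast
  have ESF7: "\<And>\<Phi> N1 N2 E. profile \<Phi> \<Longrightarrow> partition2 \<Phi> N1 N2 \<Longrightarrow>
        entails (Conj (B (nabla (\<Phi> |` N1) E)) (B (nabla (\<Phi> |` N2) E))) (B (nabla \<Phi> E))"
    using P[THEN conjunct2, THEN conjunct2, THEN conjunct2, THEN conjunct2, THEN conjunct2, THEN conjunct2, THEN conjunct1] by blast
  have ESF8: "\<And>\<Phi> N1 N2 E. profile \<Phi> \<Longrightarrow> partition2 \<Phi> N1 N2 \<Longrightarrow>
        consistent (Conj (B (nabla (\<Phi> |` N1) E)) (B (nabla (\<Phi> |` N2) E))) \<Longrightarrow>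
        entails (B (nabla \<Phi> E)) (Disj (B (nabla (\<Phi> |` N1) E)) (B (nabla (\<Phi> |` N2) E)))"
    using P[THEN conjunct2, THEN conjunct2, THEN conjunct2, THEN conjunct2, THEN conjunct2, THEN conjunct2, THEN conjunct2] by blast
  define M where "M \<Phi> S = models (B (nabla \<Phi> (estate B S)))" for \<Phi> S
  define R where "R \<Phi> w w' = (w \<in> M \<Phi> {w, w'})" for \<Phi> w w'
  have est: "\<And>S. S \<noteq> {} \<Longrightarrow> models (B (estate B S)) = S" by (rule estate[OF es])
  have F1: "\<And>\<Phi> S. profile \<Phi> \<Longrightarrow> S \<noteq> {} \<Longrightarrow> M \<Phi> S \<subseteq> S"
    using ESF1 est unfolding M_def entails_def by metis
  have F2: "\<And>\<Phi> S. M \<Phi> S \<noteq> {}" unfolding M_def by (rule B_ne[OF es])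
  have F3: "\<And>\<Phi> E. profile \<Phi> \<Longrightarrow> models (B (nabla \<Phi> E)) = M \<Phi> (models (B E))"
  proof -
    fix \<Phi> :: "'a \<rightharpoonup> 'e" and E assume p: "profile \<Phi>"
    have "fequiv (B E) (B (estate B (models (B E))))"
      using est[OF B_ne[OF es]] by (simp add: fequiv_def)
    from ESF2[OF p p _ this] show "models (B (nabla \<Phi> E)) = M \<Phi> (models (B E))"
      by (simp add: prof_equiv_def fequiv_def M_def)
  qed
  have F45: "\<And>\<Phi> S T. profile \<Phi> \<Longrightarrow> S \<subseteq> T \<Longrightarrow> S \<noteq> {} \<Longrightarrow>
     M \<Phi> T \<inter> S \<subseteq> M \<Phi> S \<and> (M \<Phi> T \<inter> S \<noteq> {} \<longrightarrow> M \<Phi> S \<subseteq> M \<Phi> T \<inter> S)"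
  proof -
    fix \<Phi> :: "'a \<rightharpoonup> 'e" and S T :: "'v set set" assume p: "profile \<Phi>" and st: "S \<subseteq> T" and sn: "S \<noteq> {}"
    then have tn: "T \<noteq> {}" by blast
    have fe: "fequiv (B (estate B S)) (Conj (B (estate B T)) (B (estate B S)))"
      using st by (auto simp: fequiv_def est[OF sn] est[OF tn])
    show "M \<Phi> T \<inter> S \<subseteq> M \<Phi> S \<and> (M \<Phi> T \<inter> S \<noteq> {} \<longrightarrow> M \<Phi> S \<subseteq> M \<Phi> T \<inter> S)"
      using ESF3[OF p fe] ESF4[OF p fe]
      by (simp add: M_def entails_def consistent_iff est[OF sn])
  qed
  have Rep: "\<And>\<Phi> S. profile \<Phi> \<Longrightarrow> S \<noteq> {} \<Longrightarrow> M \<Phi> S = maxset S (R \<Phi>)"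
  proof -
    fix \<Phi> :: "'a \<rightharpoonup> 'e" and S :: "'v set set" assume p: "profile \<Phi>" and sn: "S \<noteq> {}"
    show "M \<Phi> S = maxset S (R \<Phi>)"
    proof
      show "M \<Phi> S \<subseteq> maxset S (R \<Phi>)"
      proof
        fix x assume x: "x \<in> M \<Phi> S"
        have xs: "x \<in> S" using x F1[OF p sn] by blast
        have "\<forall>y\<in>S. R \<Phi> x y"
        proof
          fix y assume ys: "y \<in> S"
          have "M \<Phi> S \<inter> {x,y} \<noteq> {}" using x by blast
          then have "M \<Phi> {x,y} \<subseteq> M \<Phi> S \<inter> {x,y}" and "M \<Phi> S \<inter> {x,y} \<subseteq> M \<Phi> {x,y}"
            using F45[OF p, of "{x,y}" S] xs ys by auto
          then show "R \<Phi> x y" using x unfolding R_def by blast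
        qed
        then show "x \<in> maxset S (R \<Phi>)" using xs by (simp add: maxset_def)
      qed
    next
      show "maxset S (R \<Phi>) \<subseteq> M \<Phi> S"
      proof
        fix x assume x: "x \<in> maxset S (R \<Phi>)"
        obtain z where z: "z \<in> M \<Phi> S" using F2 by blast
        have zs: "z \<in> S" using z F1[OF p sn] by blast
        have xs: "x \<in> S" using x by (simp add: maxset_def)
        have "x \<in> M \<Phi> {x,z}" using x zs unfolding maxset_def R_def by blast
        moreover have "M \<Phi> S \<inter> {x,z} \<noteq> {}" using z by blast
        then have "M \<Phi> {x,z} \<subseteq> M \<Phi> S \<inter> {x,z}"
          using F45[OF p, of "{x,z}" S] xs zs by auto
        ultimately show "x \<in> M \<Phi> S" by blast
      qed
    qed
  qed
  have rep: "represents B nabla R"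
    unfolding represents_def using F3 Rep B_ne[OF es] by metis
  have tp: "\<And>\<Phi>. profile \<Phi> \<Longrightarrow> total_preorder (R \<Phi>)"
  proof -
    fix \<Phi> :: "'a \<rightharpoonup> 'e" assume p: "profile \<Phi>"
    have sub: "\<And>S. S \<noteq> {} \<Longrightarrow> M \<Phi> S \<subseteq> S" by (rule F1[OF p])
    have cut: "\<And>S T. S \<subseteq> T \<Longrightarrow> S \<noteq> {} \<Longrightarrow> M \<Phi> T \<inter> S \<noteq> {} \<Longrightarrow> M \<Phi> S = M \<Phi> T \<inter> S"
      using F45[OF p] by blast
    have total: "\<forall>x y. R \<Phi> x y \<or> R \<Phi> y x"
    proof (intro allI)
      fix x y
      have "M \<Phi> {x,y} \<noteq> {}" "M \<Phi> {x,y} \<subseteq> {x,y}" using F2 sub[of "{x,y}"] by auto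
      then show "R \<Phi> x y \<or> R \<Phi> y x" unfolding R_def by (auto simp: insert_commute)
    qed
    have trans: "\<forall>x y z. R \<Phi> x y \<longrightarrow> R \<Phi> y z \<longrightarrow> R \<Phi> x z"
    proof (intro allI impI)
      fix x y z assume xy: "R \<Phi> x y" and yz: "R \<Phi> y z"
      let ?T = "{x,y,z}"
      have xT: "x \<in> M \<Phi> ?T \<Longrightarrow> R \<Phi> x z"
      proof -
        assume "x \<in> M \<Phi> ?T"
        then have "M \<Phi> {x,z} = M \<Phi> ?T \<inter> {x,z}" by (intro cut) auto
        then show "R \<Phi> x z" using \<open>x \<in> M \<Phi> ?T\<close> unfolding R_def by blast
      qed
      have yT: "y \<in> M \<Phi> ?T \<Longrightarrow> x \<in> M \<Phi> ?T"
      proof -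
        assume "y \<in> M \<Phi> ?T"
        then have "M \<Phi> {x,y} = M \<Phi> ?T \<inter> {x,y}" by (intro cut) auto
        then show "x \<in> M \<Phi> ?T" using xy unfolding R_def by blast
      qed
      have zT: "z \<in> M \<Phi> ?T \<Longrightarrow> y \<in> M \<Phi> ?T"
      proof -
        assume "z \<in> M \<Phi> ?T"
        then have "M \<Phi> {y,z} = M \<Phi> ?T \<inter> {y,z}" by (intro cut) auto
        then show "y \<in> M \<Phi> ?T" using yz unfolding R_def by blast
      qed
      obtain u where u: "u \<in> M \<Phi> ?T" using F2 by blast
      have "u \<in> ?T" using u sub[of ?T] by blast
      then show "R \<Phi> x z" using u xT yT zT by blast
    qed
    show "total_preorder (R \<Phi>)" unfolding total_preorder_def using total trans by blast
  qed
  have Rmax: "\<And>\<Phi> w w'. profile \<Phi> \<Longrightarrow> R \<Phi> w w' = (w \<in> models (B (nabla \<Phi> (estate B {w,w'}))))"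
    unfolding R_def M_def by simp
  have qf: "quasifaithful B R"
    unfolding quasifaithful_def basic_assignment_def assignment_def
  proof (intro conjI allI impI)
    fix \<Phi> :: "'a \<rightharpoonup> 'e" assume "profile \<Phi>" then show "total_preorder (R \<Phi>)" by (rule tp)
  next
    fix \<Phi> \<Psi> :: "'a \<rightharpoonup> 'e" assume p: "profile \<Phi>" "profile \<Psi>" "prof_equiv \<Phi> \<Psi>"
    have "\<And>S. M \<Phi> S = M \<Psi> S" using ESF2[OF p] unfolding M_def fequiv_def by blast
    then show "R \<Phi> = R \<Psi>" unfolding R_def by (intro ext) simp
  next
    fix j k :: 'a and Ej Ek :: 'e assume ne: "Ej \<noteq> Ek"
    obtain E' where E': "\<not> fequiv (B (nabla [j \<mapsto> Ej] E')) (B (nabla [k \<mapsto> Ek] E'))"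
      using ESF5[OF ne] by blast
    have p1: "profile [j \<mapsto> Ej]" and p2: "profile [k \<mapsto> Ek]" by (rule profile_single)+
    show "R [j \<mapsto> Ej] \<noteq> R [k \<mapsto> Ek]"
    proof
      assume eq: "R [j \<mapsto> Ej] = R [k \<mapsto> Ek]"
      have "M [j \<mapsto> Ej] (models (B E')) = M [k \<mapsto> Ek] (models (B E'))"
        using Rep[OF p1 B_ne[OF es]] Rep[OF p2 B_ne[OF es]] eq by simp
      then show False using E' F3[OF p1] F3[OF p2] by (simp add: fequiv_def)
    qed
  next
    fix \<Phi> :: "'a \<rightharpoonup> 'e" assume p: "profile \<Phi>" and c: "consistent (BigConj B \<Phi>)"
    have u: "models (B (estate B UNIV)) = UNIV" by (rule est) simp
    have "consistent (Conj (BigConj B \<Phi>) (B (estate B UNIV)))" using c u by (simp add: consistent_iff)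
    from ESF6[OF p this] have "models (B (nabla \<Phi> (estate B UNIV))) = models (BigConj B \<Phi>)"
      using u by (simp add: fequiv_def)
    then show "models (BigConj B \<Phi>) = maxset UNIV (R \<Phi>)"
      using Rep[OF p, of UNIV] unfolding M_def by simp
  next
    fix \<Phi> :: "'a \<rightharpoonup> 'e" and N1 N2 w w'
    assume p: "profile \<Phi>" and pt: "partition2 \<Phi> N1 N2"
      and r1: "R (\<Phi> |` N1) w w'" and r2: "R (\<Phi> |` N2) w w'"
    from ESF7[OF p pt, of "estate B {w,w'}"] r1 r2 show "R \<Phi> w w'"
      unfolding R_def M_def entails_def by auto
  next
    fix \<Phi> :: "'a \<rightharpoonup> 'e" and N1 N2 w w'
    assume p: "profile \<Phi>" and pt: "partition2 \<Phi> N1 N2"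
      and s1: "strict (R (\<Phi> |` N1)) w w'" and s2: "strict (R (\<Phi> |` N2)) w w'"
    from profile_restr[OF p pt] have p1: "profile (\<Phi> |` N1)" and p2: "profile (\<Phi> |` N2)" by auto
    have pn: "{w,w'} \<noteq> {}" by simp
    have m1: "M (\<Phi> |` N1) {w,w'} = {w}"
      using s1 F1[OF p1 pn] F2 unfolding strict_def R_def by (auto simp: insert_commute)
    have m2: "M (\<Phi> |` N2) {w,w'} = {w}"
      using s2 F1[OF p2 pn] F2 unfolding strict_def R_def by (auto simp: insert_commute)
    have "consistent (Conj (B (nabla (\<Phi> |` N1) (estate B {w,w'}))) (B (nabla (\<Phi> |` N2) (estate B {w,w'}))))"
      using m1 m2 unfolding M_def by (simp add: consistent_iff)
    from ESF8[OF p pt this] have "M \<Phi> {w,w'} \<subseteq> {w}"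
      using m1 m2 unfolding M_def entails_def by simp
    then have "M \<Phi> {w,w'} = {w}" using F2 by blast
    moreover have "w \<noteq> w'" using s1 unfolding strict_def by blast
    ultimately show "strict (R \<Phi>) w w'" unfolding strict_def R_def by (auto simp: insert_commute)
  qed
  have uniq: "\<forall>R'. quasifaithful B R' \<and> represents B nabla R' \<longrightarrow>
         (\<forall>\<Phi>. profile \<Phi> \<longrightarrow> R' \<Phi> = R \<Phi>)"
  proof (intro allI impI)
    fix R' \<Phi> assume h: "quasifaithful B R' \<and> represents B nabla R'" and p: "profile (\<Phi>::'a \<rightharpoonup> 'e)"
    have tp': "total_preorder (R' \<Phi>)" using h p
      by (simp add: quasifaithful_def basic_assignment_def assignment_def)
    show "R' \<Phi> = R \<Phi>"
    proof (intro ext)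
      fix w w'
      have "models (B (nabla \<Phi> (estate B {w,w'}))) = maxset {w,w'} (R' \<Phi>)"
        using h p est[of "{w,w'}"] by (simp add: represents_def)
      then show "R' \<Phi> w w' = R \<Phi> w w'"
        using max_pair[OF tp'] unfolding R_def M_def by simp
    qed
  qed
  show ?thesis using qf rep uniq by blast
qed


theorem theorem3:
  fixes B :: "'e \<Rightarrow> 'v::finite fm"
    and nabla :: "('a::wellorder \<rightharpoonup> 'e) \<Rightarrow> 'e \<Rightarrow> 'e"
  assumes "epistemic_space B"
  shows "ESF_postulates B nabla \<longleftrightarrow>
    (\<exists>R. quasifaithful B R \<and> represents B nabla R \<and>
      (\<forall>R'. quasifaithful B R' \<and> represents B nabla R' \<longrightarrow>
         (\<forall>\<Phi>. profile \<Phi> \<longrightarrow> R' \<Phi> = R \<Phi>)))"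
proof
  assume "ESF_postulates B nabla"
  then show "\<exists>R. quasifaithful B R \<and> represents B nabla R \<and>
      (\<forall>R'. quasifaithful B R' \<and> represents B nabla R' \<longrightarrow>
         (\<forall>\<Phi>. profile \<Phi> \<longrightarrow> R' \<Phi> = R \<Phi>))" by (rule fwd_dir[OF assms])
next
  assume "\<exists>R. quasifaithful B R \<and> represents B nabla R \<and>
      (\<forall>R'. quasifaithful B R' \<and> represents B nabla R' \<longrightarrow>
         (\<forall>\<Phi>. profile \<Phi> \<longrightarrow> R' \<Phi> = R \<Phi>))"
  then obtain R where "quasifaithful B R" "represents B nabla R" by blast
  then show "ESF_postulates B nabla" by (rule rev_dir[OF assms])
qed

end
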